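(* Let $\mathcal{Q}=\{\mathcal{Q}^1,\dots,\mathcal{Q}^M\}$ be a set of $M$ pairwise distinct valid token sequences, and run beam search of width $M$ on the language model under grounded constrained decoding with respect to $\mathcal{Q}$. Then the set of complete sequences returned by the beam search is exactly $\{\mathcal{Q}^1,\dots,\mathcal{Q}^M\}$.
   Context: An autoregressive language model has a finite vocabulary $\mathcal{V}$ containing an end-of-sequence token $\langle eos\rangle$; given a prefix $(t_0,\dots,t_i)$ (possibly empty) it outputs logits $(\ell_{i+1}^{(x)})_{x\in\mathcal{V}}$, all finite real numbers. Each valid sequence $\mathcal{Q}^k=(n_0,\dots,n_{Q_k})\in\mathcal{V}^{Q_k+1}$ has variable length and contains $\langle eos\rangle$ exactly once, as its last token; $\mathcal{Q}^k_{0:j}$ denotes its length-$j$ prefix. Grounded constrained decoding: after prefix $(t_0,\dots,t_i)$, the valid-next-token set is $M_{i+1}=\{t\in\mathcal{V}:\exists k,\ \mathcal{Q}^k_{0:i+2}=(t_0,\dots,t_i,t)\}$ (for the empty prefix, the set of first tokens of the $\mathcal{Q}^k$); masked logits are $\tilde\ell_{i+1}^{(x)}=\ell_{i+1}^{(x)}$ if $x\in M_{i+1}$ and $-\infty$ otherwise; the constrained next-token probability $\tilde p(\cdot\mid t_0,\dots,t_i)$ is their softmax with $\exp(-\infty)=0$ (all probabilities $0$ if $M_{i+1}=\emptyset$); the constrained probability $\tilde p$ of a sequence is the product of its constrained conditional next-token probabilities. A sequence is complete if it ends in $\langle eos\rangle$. Beam search of width $M$: start from the empty hypothesis; at each step,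 every incomplete hypothesis is extended by every token of $\mathcal{V}$, complete hypotheses are carried over unchanged, hypotheses with constrained probability $0$ are discarded, and among the remaining ones the (at most) $M$ with the highest constrained probability are kept; the procedure stops when all kept hypotheses are complete and returns them. *)

theory Defs
  imports Complex_Main
begin

text \<open>Vocabulary: a finite type 'v.  A language model is given by its logits
  L prefix x (finite reals).  Sequences are lists, the end-of-sequence token is eos.\<close>

definition valid_seq :: "'v \<Rightarrow> 'v list \<Rightarrow> bool" where
  "valid_seq eos q \<longleftrightarrow> q \<noteq> [] \<and> last q = eos \<and> eos \<notin> set (butlast q)"

definition complete :: "'v \<Rightarrow> 'v list \<Rightarrow> bool" where
  "complete eos h \<longleftrightarrow> h \<noteq> [] \<and> last h = eos"

definition valid_next :: "'v list set \<Rightarrow> 'v list \<Rightarrow> 'v set" where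
  "valid_next Q p = {t. \<exists>q\<in>Q. take (length p + 1) q = p @ [t]}"

definition cprob :: "('v list \<Rightarrow> 'v \<Rightarrow> real) \<Rightarrow> 'v list set \<Rightarrow> 'v list \<Rightarrow> 'v::finite \<Rightarrow> real" where
  "cprob L Q p t = (if t \<in> valid_next Q p
      then exp (L p t) / (\<Sum>x\<in>valid_next Q p. exp (L p x)) else 0)"

definition seq_prob :: "('v list \<Rightarrow> 'v \<Rightarrow> real) \<Rightarrow> 'v list set \<Rightarrow> 'v::finite list \<Rightarrow> real" where
  "seq_prob L Q s = (\<Prod>i<length s. cprob L Q (take i s) (s ! i))"

definition candidates :: "('v list \<Rightarrow> 'v \<Rightarrow> real) \<Rightarrow> 'v list set \<Rightarrow> 'v \<Rightarrow> 'v::finite list set \<Rightarrow> 'v list set" where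
  "candidates L Q eos B =
     {c. ((\<exists>h\<in>B. \<not> complete eos h \<and> (\<exists>t. c = h @ [t])) \<or> (c \<in> B \<and> complete eos c))
         \<and> seq_prob L Q c > 0}"

text \<open>One beam step of width M: keep (at most) M candidates of highest probability
  (ties broken arbitrarily, hence a relation).\<close>
definition beam_step :: "('v list \<Rightarrow> 'v \<Rightarrow> real) \<Rightarrow> 'v list set \<Rightarrow> 'v \<Rightarrow> nat
     \<Rightarrow> 'v::finite list set \<Rightarrow> 'v list set \<Rightarrow> bool" where
  "beam_step L Q eos M B B' \<longleftrightarrow>
     (let C = candidates L Q eos B in
       B' \<subseteq> C \<and> card B' = min M (card C) \<and>
       (\<forall>x\<in>B'. \<forall>y\<in>C - B'. seq_prob L Q y \<le> seq_prob L Q x))"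

inductive beam_reach :: "('v list \<Rightarrow> 'v \<Rightarrow> real) \<Rightarrow> 'v list set \<Rightarrow> 'v \<Rightarrow> nat
     \<Rightarrow> nat \<Rightarrow> 'v::finite list set \<Rightarrow> bool"
  for L Q eos M where
  init: "beam_reach L Q eos M 0 {[]}"
| step: "beam_reach L Q eos M n B \<Longrightarrow> \<not> (\<forall>h\<in>B. complete eos h) \<Longrightarrow>
         beam_step L Q eos M B B' \<Longrightarrow> beam_reach L Q eos M (Suc n) B'"

end

theory Submission
  imports Defs
begin

definition PP :: "'v list set \<Rightarrow> nat \<Rightarrow> 'v list set" where
  "PP Q n = (\<lambda>q. take n q) ` Q"

lemma cprob_nonneg: "cprob L Q p t \<ge> 0"
  unfolding cprob_def by (auto intro!: divide_nonneg_nonneg sum_nonneg)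

lemma cprob_pos: "cprob L Q p t > 0 \<longleftrightarrow> t \<in> valid_next Q p"
proof
  assume "t \<in> valid_next Q p"
  moreover have "finite (valid_next Q p)" by simp
  ultimately have "(\<Sum>x\<in>valid_next Q p. exp (L p x)) > 0"
    by (intro sum_pos) auto
  with \<open>t \<in> valid_next Q p\<close> show "cprob L Q p t > 0" unfolding cprob_def by simp
qed (auto simp: cprob_def split: if_splits)

lemma seq_prob_pos:
  "seq_prob L Q c > 0 \<longleftrightarrow> (\<forall>i<length c. \<exists>q\<in>Q. take (Suc i) q = take (Suc i) c)"
proof -
  have "seq_prob L Q c > 0 \<longleftrightarrow> (\<forall>i<length c. cprob L Q (take i c) (c!i) > 0)"
    unfolding seq_prob_def
  proof
    assume "0 < (\<Prod>i<length c. cprob L Q (take i c) (c ! i))"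
    show "\<forall>i<length c. 0 < cprob L Q (take i c) (c ! i)"
    proof (intro allI impI)
      fix i assume i: "i < length c"
      show "0 < cprob L Q (take i c) (c ! i)"
      proof (rule ccontr)
        assume "\<not> 0 < cprob L Q (take i c) (c ! i)"
        then have "cprob L Q (take i c) (c ! i) = 0" using cprob_nonneg[of L Q "take i c" "c!i"] by simp
        then have "(\<Prod>i<length c. cprob L Q (take i c) (c ! i)) = 0"
          using i by (intro prod_zero) auto
        then show False using \<open>0 < (\<Prod>i<length c. cprob L Q (take i c) (c ! i))\<close> by linarith
      qed
    qed
  qed (auto intro: prod_pos)
  also have "\<dots> \<longleftrightarrow> (\<forall>i<length c. \<exists>q\<in>Q. take (Suc i) q = take (Suc i) c)"
    by (simp add: cprob_pos valid_next_def take_Suc_conv_app_nth)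
  finally show ?thesis .
qed

lemma seq_prob_pos_ne:
  assumes "c \<noteq> []"
  shows "seq_prob L Q c > 0 \<longleftrightarrow> (\<exists>q\<in>Q. take (length c) q = c)"
proof
  assume "seq_prob L Q c > 0"
  then have "\<exists>q\<in>Q. take (Suc (length c - 1)) q = take (Suc (length c - 1)) c"
  proof -
    have "length c - 1 < length c" using assms by simp
    then show ?thesis using \<open>seq_prob L Q c > 0\<close> seq_prob_pos by blast
  qed
  then show "\<exists>q\<in>Q. take (length c) q = c" using assms by simp
next
  assume "\<exists>q\<in>Q. take (length c) q = c"
  then obtain q where q: "q\<in>Q" "take (length c) q = c" by blast
  have "take (Suc i) q = take (Suc i) c" if "i < length c" for i
    using q(2) that by (metis Suc_leI min_def take_take)
  with q(1) show "seq_prob L Q c > 0" using seq_prob_pos by blast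
qed

lemma take_complete:
  assumes "valid_seq eos q" "complete eos (take n q)"
  shows "take n q = q"
proof (rule ccontr)
  assume "take n q \<noteq> q"
  then have nl: "n < length q" by (cases "length q \<le> n") auto
  have "n > 0" using assms(2) by (auto simp: complete_def)
  have "last (take n q) = q ! (n-1)" using nl \<open>n>0\<close>
    by (subst last_conv_nth) (auto simp: min_def)
  moreover have "q ! (n-1) \<in> set (butlast q)"
  proof -
    have "n - 1 < length (butlast q)" using nl \<open>n>0\<close> by simp
    then have "butlast q ! (n-1) \<in> set (butlast q)" by (rule nth_mem)
    moreover have "butlast q ! (n-1) = q ! (n-1)" using \<open>n - 1 < length (butlast q)\<close> by (simp add: nth_butlast)
    ultimately show ?thesis by simp
  qed
  ultimately show False using assms by (auto simp: complete_def valid_seq_def)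
qed

lemma take_incomplete:
  assumes "valid_seq eos q" "n < length q"
  shows "\<not> complete eos (take n q)"
proof
  assume "complete eos (take n q)"
  then have "take n q = q" using take_complete[OF assms(1)] by blast
  then have "length (take n q) = length q" by simp
  with assms(2) show False by simp
qed

lemma cand:
  assumes V: "\<forall>q\<in>Q. valid_seq eos q"
    and B: "(n = 0 \<and> B = {[]}) \<or> B = PP Q n"
  shows "candidates L Q eos B = PP Q (Suc n)"
proof
  show "candidates L Q eos B \<subseteq> PP Q (Suc n)"
  proof
    fix c assume "c \<in> candidates L Q eos B"
    then have c: "(\<exists>h\<in>B. \<not> complete eos h \<and> (\<exists>t. c = h @ [t])) \<or> (c \<in> B \<and> complete eos c)"
      "seq_prob L Q c > 0" by (auto simp: candidates_def)
    from c(1) show "c \<in> PP Q (Suc n)"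
    proof
      assume "\<exists>h\<in>B. \<not> complete eos h \<and> (\<exists>t. c = h @ [t])"
      then obtain h t where h: "h \<in> B" "\<not> complete eos h" "c = h @ [t]" by blast
      have "length h = n"
        using B
      proof
        assume "n = 0 \<and> B = {[]}" then show ?thesis using h by auto
      next
        assume "B = PP Q n"
        then obtain q where "q \<in> Q" "h = take n q" using h(1) by (auto simp: PP_def)
        note hq = this
        show ?thesis
        proof (cases "length q \<le> n")
          case True
          then have "h = q" using hq by simp
          moreover have "complete eos q" using V hq(1) by (simp add: valid_seq_def complete_def)
          ultimately show ?thesis using h(2) by simp
        next
          case False
          then show ?thesis using hq by simp
        qed
      qed
      then have lc: "length c = Suc n" using h by simp
      obtain q where "q \<in> Q" "take (length c) q = c"
        using seq_prob_pos_ne[of c] c(2) h(3) by auto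
      then show ?thesis using lc by (auto simp: PP_def)
    next
      assume a: "c \<in> B \<and> complete eos c"
      then have "c \<noteq> []" by (auto simp: complete_def)
      then have "B = PP Q n" using B a by auto
      then obtain q where "q \<in> Q" "c = take n q" using a by (auto simp: PP_def)
      then have "c = q" using take_complete[of eos q n] V a by simp
      have "length c = min n (length q)" using \<open>c = take n q\<close> by simp
      then have "length q \<le> n" using \<open>c = q\<close> by (simp add: min_def split: if_splits)
      then have "c = take (Suc n) q" using \<open>c = q\<close> by simp
      then show ?thesis using \<open>q\<in>Q\<close> by (auto simp: PP_def)
    qed
  qed
next
  show "PP Q (Suc n) \<subseteq> candidates L Q eos B"
  proof
    fix c assume "c \<in> PP Q (Suc n)"
    then obtain q where q: "q \<in> Q" "c = take (Suc n) q" by (auto simp: PP_def)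
    have qv: "valid_seq eos q" using V q by auto
    then have qne: "q \<noteq> []" by (auto simp: valid_seq_def)
    then have cne: "c \<noteq> []" using q by simp
    have pos: "seq_prob L Q c > 0"
    proof -
      have "take (length c) q = c" using q(2) by (cases "length q \<le> Suc n") (simp_all add: min_def)
      then show ?thesis using seq_prob_pos_ne[OF cne] q(1) by blast
    qed
    show "c \<in> candidates L Q eos B"
    proof (cases "length q \<le> n")
      case True
      then have "n \<noteq> 0" using qne by (metis le_zero_eq length_0_conv)
      then have "B = PP Q n" using B by auto
      moreover have "c = take n q" "c = q" using True q by auto
      ultimately have "c \<in> B" using q by (auto simp: PP_def)
      moreover have "complete eos c" using qv \<open>c = q\<close> by (auto simp: valid_seq_def complete_def)
      ultimately show ?thesis using pos by (auto simp: candidates_def)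
    next
      case False
      have "take n q \<in> B" using B q by (auto simp: PP_def)
      moreover have "\<not> complete eos (take n q)" using take_incomplete[OF qv] False by simp
      moreover have "c = take n q @ [q ! n]" using q False by (simp add: take_Suc_conv_app_nth)
      ultimately show ?thesis using pos by (auto simp: candidates_def)
    qed
  qed
qed

lemma PP_card: "finite Q \<Longrightarrow> card (PP Q n) \<le> card Q"
  unfolding PP_def by (rule card_image_le)

lemma step_eq:
  assumes "finite Q" "card Q = M" "\<forall>q\<in>Q. valid_seq eos q"
    and "(n = 0 \<and> B = {[]}) \<or> B = PP Q n"
  shows "beam_step L Q eos M B B' \<longleftrightarrow> B' = PP Q (Suc n)"
proof -
  have C: "candidates L Q eos B = PP Q (Suc n)" using cand assms(3,4) by blast
  have f: "finite (PP Q (Suc n))" using assms(1) by (simp add: PP_def)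
  have m: "min M (card (PP Q (Suc n))) = card (PP Q (Suc n))"
    using PP_card[OF assms(1)] assms(2) by simp
  show ?thesis unfolding beam_step_def Let_def C m
    using f by (auto dest: card_subset_eq)
qed

lemma inv:
  assumes "finite Q" "card Q = M" "\<forall>q\<in>Q. valid_seq eos q"
  shows "beam_reach L Q eos M n B \<Longrightarrow> (n = 0 \<and> B = {[]}) \<or> (n > 0 \<and> B = PP Q n)"
proof (induction rule: beam_reach.induct)
  case init then show ?case by simp
next
  case (step n B B')
  then have "(n = 0 \<and> B = {[]}) \<or> B = PP Q n" by auto
  with step_eq[OF assms this] step show ?case by auto
qed

lemma PP_big:
  assumes "finite Q" "n \<ge> Max (insert 0 (length ` Q))"
  shows "PP Q n = Q"
proof -
  have "take n q = q" if "q \<in> Q" for q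
  proof -
    have "length q \<le> Max (insert 0 (length ` Q))" using assms(1) that by auto
    then show ?thesis using assms(2) by simp
  qed
  then show ?thesis unfolding PP_def by force
qed

theorem lemma1p3:
  fixes L :: "'v::finite list \<Rightarrow> 'v \<Rightarrow> real"
    and eos :: 'v
    and Q :: "'v list set"
    and M :: nat
  assumes "finite Q"
    and "card Q = M"
    and "\<forall>q\<in>Q. valid_seq eos q"
  shows "(\<exists>N. \<forall>n B. beam_reach L Q eos M n B \<longrightarrow> n \<le> N)
       \<and> (\<exists>n B. beam_reach L Q eos M n B \<and> (\<forall>h\<in>B. complete eos h))
       \<and> (\<forall>n B. beam_reach L Q eos M n B \<and> (\<forall>h\<in>B. complete eos h) \<longrightarrow> B = Q)"
proof -
  define K where "K = Max (insert 0 (length ` Q))"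
  have QC: "\<forall>h\<in>Q. complete eos h" using assms(3) by (auto simp: valid_seq_def complete_def)
  have I: "\<And>n B. beam_reach L Q eos M n B \<Longrightarrow> (n = 0 \<and> B = {[]}) \<or> (n > 0 \<and> B = PP Q n)"
    using inv[OF assms] by blast
  have P1: "\<forall>n B. beam_reach L Q eos M n B \<longrightarrow> n \<le> K + 1"
  proof (intro allI impI)
    fix n B assume "beam_reach L Q eos M n B"
    then show "n \<le> K + 1"
    proof (induction rule: beam_reach.induct)
      case init then show ?case by simp
    next
      case (step n B B')
      have "n = 0 \<or> n < K"
      proof (rule ccontr)
        assume "\<not> (n = 0 \<or> n < K)"
        then have "B = PP Q n" "n \<ge> K" using I[OF step(1)] by auto
        then have "B = Q" using PP_big[OF assms(1)] K_def by simp
        then show False using step(2) QC by simp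
      qed
      then show ?case by auto
    qed
  qed
  have ex: "(\<exists>B. beam_reach L Q eos M m B) \<or> (\<exists>n B. beam_reach L Q eos M n B \<and> (\<forall>h\<in>B. complete eos h))" for m
  proof (induction m)
    case 0 then show ?case using beam_reach.init by blast
  next
    case (Suc m)
    show ?case
    proof (cases "\<exists>n B. beam_reach L Q eos M n B \<and> (\<forall>h\<in>B. complete eos h)")
      case False
      then obtain B where B: "beam_reach L Q eos M m B" "\<not> (\<forall>h\<in>B. complete eos h)"
        using Suc by blast
      have "(m = 0 \<and> B = {[]}) \<or> B = PP Q m" using I[OF B(1)] by auto
      then have "beam_step L Q eos M B (PP Q (Suc m))" using step_eq[OF assms] by blast
      then show ?thesis using beam_reach.step[OF B] by blast
    qed blast
  qed
  have P2: "\<exists>n B. beam_reach L Q eos M n B \<and> (\<forall>h\<in>B. complete eos h)"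
  proof -
    from ex[of "Suc K"] show ?thesis
    proof
      assume "\<exists>B. beam_reach L Q eos M (Suc K) B"
      then obtain B where B: "beam_reach L Q eos M (Suc K) B" by blast
      then have "B = PP Q (Suc K)" using I by fastforce
      then have "B = Q" using PP_big[OF assms(1)] K_def by simp
      then show ?thesis using B QC by blast
    qed
  qed
  have P3: "\<forall>n B. beam_reach L Q eos M n B \<and> (\<forall>h\<in>B. complete eos h) \<longrightarrow> B = Q"
  proof (intro allI impI)
    fix n B assume a: "beam_reach L Q eos M n B \<and> (\<forall>h\<in>B. complete eos h)"
    then have "B = PP Q n" using I[of n B] by (auto simp: complete_def)
    have "take n q = q" if "q \<in> Q" for q
      using take_complete[of eos q n] a \<open>B = PP Q n\<close> that assms(3) by (auto simp: PP_def)
    then show "B = Q" using \<open>B = PP Q n\<close> unfolding PP_def by force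
  qed
  show ?thesis using P1 P2 P3 by blast
qed

end
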